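(* Let $\mathbb{K}$ be an algebraically closed field, let $A$ be a $\mathbb{K}$-algebra which is an integral domain, and let $\delta$ be a non-negative subdegree on $A$ with minimal presentation $\delta=\max_{1\le i\le N}\delta_i$. Let $X:=\operatorname{Spec}A$, viewed as an open subset of $\bar X^\delta:=\operatorname{Proj}A^\delta$. Then the number of irreducible components of $X_\infty:=\bar X^\delta\setminus X$ is $N$ if none of the $\delta_i$ is the zero function, and $N-1$ otherwise.
   Context: A degree-like function on a $\mathbb{K}$-algebra $A$ is a map $\delta: A\setminus\{0\}\to\mathbb{Z}\cup\{-\infty\}$ such that $\delta(c)=0$ for nonzero constants $c\in\mathbb{K}$; $\delta(f+g)\le\max\{\delta(f),\delta(g)\}$, with strict inequality implying $\delta(f)=\delta(g)$; and $\delta(fg)\le\delta(f)+\delta(g)$. It is a semidegree if $\delta(fg)=\delta(f)+\delta(g)$, and a subdegree if it is the pointwise maximum of semidegrees $\delta_1,\dots,\delta_N$; the presentation is minimal if for each $i$ there is $f$ with $\delta_i(f)>\delta_j(f)$ for all $j\neq i$. With $F_d:=\{f\in A:\delta(f)\le d\}$, $A^\delta:=\bigoplus_{d\ge0}F_d\cong\sum_{d\ge0}F_dt^d$, with $(f)_d$ the copy of $f$ in degree $d$. The open embedding $X=\operatorname{Spec}A\hookrightarrow\operatorname{Proj}A^\delta$ is $\mathfrak p\mapsto\bigoplus_{d\ge0}(\mathfrak p\cap F_d)$, whose image is the complement of $V((1)_1)$. *)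

theory Defs
  imports "HOL-Computational_Algebra.Polynomial" "HOL-Library.Extended_Real"
begin

definition alg_closed :: "'k::field itself \<Rightarrow> bool" where
  "alg_closed _ \<longleftrightarrow> (\<forall>p :: 'k poly. degree p > 0 \<longrightarrow> (\<exists>x. poly p x = 0))"

definition k_algebra :: "('k::field \<Rightarrow> 'a::idom) \<Rightarrow> bool" where
  "k_algebra emb \<longleftrightarrow> emb 1 = 1 \<and> (\<forall>x y. emb (x + y) = emb x + emb y)
     \<and> (\<forall>x y. emb (x * y) = emb x * emb y)"

section \<open>Degree-like functions (values in Z \<union> {-\<infinity>}, only nonzero arguments matter)\<close>

definition degree_like :: "('k::field \<Rightarrow> 'a::idom) \<Rightarrow> ('a \<Rightarrow> ereal) \<Rightarrow> bool" where
  "degree_like emb \<delta> \<longleftrightarrow>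
     (\<forall>f. f \<noteq> 0 \<longrightarrow> \<delta> f = -\<infinity> \<or> (\<exists>n::int. \<delta> f = ereal (real_of_int n)))
   \<and> (\<forall>c. c \<noteq> 0 \<longrightarrow> \<delta> (emb c) = 0)
   \<and> (\<forall>f g. f \<noteq> 0 \<and> g \<noteq> 0 \<and> f + g \<noteq> 0 \<longrightarrow>
        \<delta> (f + g) \<le> max (\<delta> f) (\<delta> g)
        \<and> (\<delta> (f + g) < max (\<delta> f) (\<delta> g) \<longrightarrow> \<delta> f = \<delta> g))
   \<and> (\<forall>f g. f \<noteq> 0 \<and> g \<noteq> 0 \<longrightarrow> \<delta> (f * g) \<le> \<delta> f + \<delta> g)"

definition semidegree :: "('k::field \<Rightarrow> 'a::idom) \<Rightarrow> ('a \<Rightarrow> ereal) \<Rightarrow> bool" where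
  "semidegree emb \<delta> \<longleftrightarrow> degree_like emb \<delta>
     \<and> (\<forall>f g. f \<noteq> 0 \<and> g \<noteq> 0 \<longrightarrow> \<delta> (f * g) = \<delta> f + \<delta> g)"

definition subdegree_presentation ::
  "('k::field \<Rightarrow> 'a::idom) \<Rightarrow> ('a \<Rightarrow> ereal) \<Rightarrow> nat \<Rightarrow> (nat \<Rightarrow> 'a \<Rightarrow> ereal) \<Rightarrow> bool" where
  "subdegree_presentation emb \<delta> N \<delta>s \<longleftrightarrow> N \<ge> 1 \<and> degree_like emb \<delta>
     \<and> (\<forall>i<N. semidegree emb (\<delta>s i))
     \<and> (\<forall>f. f \<noteq> 0 \<longrightarrow> \<delta> f = Max ((\<lambda>i. \<delta>s i f) ` {..<N}))"

definition minimal_presentation :: "nat \<Rightarrow> (nat \<Rightarrow> 'a::idom \<Rightarrow> ereal) \<Rightarrow> bool" where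
  "minimal_presentation N \<delta>s \<longleftrightarrow>
     (\<forall>i<N. \<exists>f. f \<noteq> 0 \<and> (\<forall>j<N. j \<noteq> i \<longrightarrow> \<delta>s j f < \<delta>s i f))"

definition nonneg_on_nonzero :: "('a::idom \<Rightarrow> ereal) \<Rightarrow> bool" where
  "nonneg_on_nonzero \<delta> \<longleftrightarrow> (\<forall>f. f \<noteq> 0 \<longrightarrow> \<delta> f \<ge> 0)"

section \<open>The graded algebra A^\<delta> = sum F_d t^d inside A[t]\<close>

definition Fdeg :: "('a::idom \<Rightarrow> ereal) \<Rightarrow> nat \<Rightarrow> 'a set" where
  "Fdeg \<delta> d = {f. f = 0 \<or> \<delta> f \<le> ereal (real d)}"

definition Rdelta :: "('a::idom \<Rightarrow> ereal) \<Rightarrow> 'a poly set" where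
  "Rdelta \<delta> = {p. \<forall>d. coeff p d \<in> Fdeg \<delta> d}"

definition hom_ideal :: "'a::idom poly set \<Rightarrow> 'a poly set \<Rightarrow> bool" where
  "hom_ideal R I \<longleftrightarrow> I \<subseteq> R \<and> 0 \<in> I
     \<and> (\<forall>p\<in>I. \<forall>q\<in>I. p + q \<in> I) \<and> (\<forall>p\<in>I. - p \<in> I)
     \<and> (\<forall>r\<in>R. \<forall>p\<in>I. r * p \<in> I)
     \<and> (\<forall>p\<in>I. \<forall>d. monom (coeff p d) d \<in> I)"

definition hom_prime :: "'a::idom poly set \<Rightarrow> 'a poly set \<Rightarrow> bool" where
  "hom_prime R P \<longleftrightarrow> hom_ideal R P \<and> P \<noteq> R
     \<and> (\<forall>p\<in>R. \<forall>q\<in>R. p * q \<in> P \<longrightarrow> p \<in> P \<or> q \<in> P)"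

definition irrelevant :: "'a::idom poly set \<Rightarrow> 'a poly set" where
  "irrelevant R = {p \<in> R. coeff p 0 = 0}"

definition Proj :: "'a::idom poly set \<Rightarrow> 'a poly set set" where
  "Proj R = {P. hom_prime R P \<and> \<not> irrelevant R \<subseteq> P}"

definition proj_closed :: "'a::idom poly set \<Rightarrow> 'a poly set set \<Rightarrow> bool" where
  "proj_closed R Z \<longleftrightarrow> (\<exists>S. S \<subseteq> R \<and> Z = {P \<in> Proj R. S \<subseteq> P})"

definition prime_ideal :: "'a::idom set \<Rightarrow> bool" where
  "prime_ideal p \<longleftrightarrow> 0 \<in> p \<and> (\<forall>a\<in>p. \<forall>b\<in>p. a + b \<in> p) \<and> (\<forall>r. \<forall>a\<in>p. r * a \<in> p)
     \<and> p \<noteq> UNIV \<and> (\<forall>a b. a * b \<in> p \<longrightarrow> a \<in> p \<or> b \<in> p)"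

definition Spec :: "'a::idom set set" where
  "Spec = {p. prime_ideal p}"

definition spec_to_proj :: "('a::idom \<Rightarrow> ereal) \<Rightarrow> 'a set \<Rightarrow> 'a poly set" where
  "spec_to_proj \<delta> p = {q \<in> Rdelta \<delta>. \<forall>d. coeff q d \<in> p}"

definition X_infinity :: "('a::idom \<Rightarrow> ereal) \<Rightarrow> 'a poly set set" where
  "X_infinity \<delta> = Proj (Rdelta \<delta>) - spec_to_proj \<delta> ` Spec"

definition irreducible_wrt :: "('b set \<Rightarrow> bool) \<Rightarrow> 'b set \<Rightarrow> bool" where
  "irreducible_wrt cl Z \<longleftrightarrow> Z \<noteq> {} \<and>
     (\<forall>C1 C2. cl C1 \<and> cl C2 \<and> Z \<subseteq> C1 \<union> C2 \<longrightarrow> Z \<subseteq> C1 \<or> Z \<subseteq> C2)"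

definition irreducible_components :: "('b set \<Rightarrow> bool) \<Rightarrow> 'b set \<Rightarrow> 'b set set" where
  "irreducible_components cl Y = {Z. Z \<subseteq> Y \<and> irreducible_wrt cl Z
     \<and> (\<forall>Z'. Z \<subseteq> Z' \<and> Z' \<subseteq> Y \<and> irreducible_wrt cl Z' \<longrightarrow> Z' = Z)}"

end

theory Submission
  imports Defs
begin


lemma kalg_0: "k_algebra emb \<Longrightarrow> emb 0 = 0"
proof -
  assume k: "k_algebra emb"
  have "emb (0+0) = emb 0 + emb 0" using k unfolding k_algebra_def by blast
  hence "emb 0 = emb 0 + emb 0" by simp
  thus ?thesis by (metis add_cancel_right_right)
qed

lemma kalg_neg1: "k_algebra emb \<Longrightarrow> emb (-1) = -1"
proof -
  assume k: "k_algebra emb"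
  have "emb (-1 + 1) = emb (-1) + emb 1" using k unfolding k_algebra_def by blast
  moreover have "emb 1 = 1" using k unfolding k_algebra_def by blast
  ultimately have "0 = emb (-1) + 1" using kalg_0[OF k] by simp
  thus ?thesis by (metis add.inverse_unique add.commute)
qed

lemma dl_mult_le: "degree_like emb D \<Longrightarrow> f \<noteq> 0 \<Longrightarrow> g \<noteq> 0 \<Longrightarrow> D (f*g) \<le> D f + D g"
  unfolding degree_like_def by blast

lemma dl_fin: "degree_like emb D \<Longrightarrow> f \<noteq> 0 \<Longrightarrow> D f \<noteq> \<infinity>"
  unfolding degree_like_def by fastforce

lemma dl_int: "degree_like emb D \<Longrightarrow> f \<noteq> 0 \<Longrightarrow> D f = -\<infinity> \<or> (\<exists>n::int. D f = ereal (real_of_int n))"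
  unfolding degree_like_def by blast

lemma dl_one: "degree_like emb D \<Longrightarrow> k_algebra emb \<Longrightarrow> D 1 = 0"
  unfolding degree_like_def k_algebra_def by (metis one_neq_zero)

lemma dl_neg_le: fixes f :: "'a::idom" assumes "degree_like emb D" "k_algebra emb" "f \<noteq> 0"
  shows "D (-f) \<le> D f"
proof -
  have e: "emb (-1) = -1" using kalg_neg1[OF assms(2)] .
  have "D (emb (-1)) = 0" using assms(1) unfolding degree_like_def by simp
  hence d0: "D (-1) = 0" using e by simp
  have n1: "(-1::'a) \<noteq> 0" by simp
  have "D ((-1) * f) \<le> D (-1) + D f" using dl_mult_le[OF assms(1) n1 assms(3)] .
  thus ?thesis using d0 by simp
qed

lemma dl_neg: fixes f :: "'a::idom" assumes "degree_like emb D" "k_algebra emb" "f \<noteq> 0"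
  shows "D (-f) = D f"
  using dl_neg_le[OF assms] dl_neg_le[OF assms(1,2), of "-f"] assms(3) by simp

lemma dl_add_le: "degree_like emb D \<Longrightarrow> f \<noteq> 0 \<Longrightarrow> g \<noteq> 0 \<Longrightarrow> f + g \<noteq> 0 \<Longrightarrow> D (f+g) \<le> max (D f) (D g)"
  unfolding degree_like_def by blast

lemma dl_add_eq: "degree_like emb D \<Longrightarrow> f \<noteq> 0 \<Longrightarrow> g \<noteq> 0 \<Longrightarrow> f + g \<noteq> 0 \<Longrightarrow> D (f+g) < max (D f) (D g) \<Longrightarrow> D f = D g"
  unfolding degree_like_def by blast

lemma dl_add_strict:
  assumes "degree_like emb D" "k_algebra emb" "x \<noteq> 0" "y = 0 \<or> D y < D x"
  shows "x + y \<noteq> 0 \<and> D (x + y) = D x"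
proof (cases "y = 0")
  case True thus ?thesis using assms by simp
next
  case False
  hence lt: "D y < D x" using assms by simp
  have ne: "x + y \<noteq> 0"
  proof
    assume "x + y = 0"
    hence "y = -x" by (simp add: add_eq_0_iff2)
    thus False using lt dl_neg[OF assms(1,2,3)] by simp
  qed
  have le: "D (x+y) \<le> max (D x) (D y)" using dl_add_le[OF assms(1,3) False ne] .
  have "\<not> D (x+y) < max (D x) (D y)"
  proof
    assume "D (x+y) < max (D x) (D y)"
    hence "D x = D y" using dl_add_eq[OF assms(1,3) False ne] by blast
    thus False using lt by simp
  qed
  hence nl: "D (x+y) \<ge> max (D x) (D y)" by (simp add: not_less)
  have mx: "max (D x) (D y) = D x" using lt by (auto simp: max_def)
  have "D (x+y) = D x" using le nl mx by (metis order_antisym)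
  thus ?thesis using ne by simp
qed

definition small :: "('a::idom \<Rightarrow> ereal) \<Rightarrow> ereal \<Rightarrow> 'a \<Rightarrow> bool" where
  "small D c x \<longleftrightarrow> x = 0 \<or> D x < c"

lemma small_add: assumes "degree_like emb D" "small D c x" "small D c y"
  shows "small D c (x + y)"
proof -
  show ?thesis
  proof (cases "x = 0 \<or> y = 0 \<or> x + y = 0")
    case True thus ?thesis using assms(2,3) by (auto simp: small_def)
  next
    case False
    hence "D (x+y) \<le> max (D x) (D y)" using dl_add_le[OF assms(1)] by blast
    also have "\<dots> < c" using assms False by (simp add: small_def)
    finally show ?thesis by (simp add: small_def)
  qed
qed

lemma small_sum: assumes "degree_like emb D" "\<forall>k\<in>K. small D c (g k)"
  shows "small D c (sum g K)"
  using assms(2)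
proof (induction K rule: infinite_finite_induct)
  case (infinite A) thus ?case by (simp add: small_def)
next
  case empty thus ?case by (simp add: small_def)
next
  case (insert x F) thus ?case using small_add[OF assms(1)] by simp
qed

lemma small_neg: assumes "degree_like emb D" "k_algebra emb" "small D c x"
  shows "small D c (-x)"
  using assms(3) dl_neg[OF assms(1,2), of x] unfolding small_def by (cases "x = 0") auto

lemma ereal_lt_add: "x < ereal r \<Longrightarrow> y \<le> ereal s \<Longrightarrow> x + y < ereal (r + s)"
  by (cases x; cases y) auto

lemma ereal_le_add: "x \<le> ereal r \<Longrightarrow> y \<le> ereal s \<Longrightarrow> x + y \<le> ereal (r + s)"
  by (cases x; cases y) auto

lemma ereal_eventually: "x \<noteq> \<infinity> \<Longrightarrow> \<exists>n0::nat. \<forall>n\<ge>n0. x + ereal (- real n) < ereal c"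
proof (cases x)
  case (real r)
  show ?thesis
  proof (intro exI allI impI)
    fix n :: nat assume "n \<ge> nat \<lceil>r - c\<rceil> + 1"
    hence "real n \<ge> real (nat \<lceil>r - c\<rceil>) + 1" by linarith
    moreover have "real (nat \<lceil>r - c\<rceil>) \<ge> r - c" by linarith
    ultimately show "x + ereal (- real n) < ereal c" using real by simp
  qed
qed auto




lemma top_term:
  fixes p :: "'a::idom poly" and D :: "'a \<Rightarrow> ereal"
  assumes fin: "\<And>x. x \<noteq> 0 \<Longrightarrow> D x \<noteq> \<infinity>" and nz: "coeff p d1 \<noteq> 0"
    and ge: "D (coeff p d1) \<ge> ereal (real d1)"
  shows "\<exists>a d0. a \<ge> 0 \<and> coeff p d0 \<noteq> 0 \<and> D (coeff p d0) = ereal (a + real d0)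
     \<and> (\<forall>d. coeff p d \<noteq> 0 \<longrightarrow> D (coeff p d) \<le> ereal (a + real d))
     \<and> (\<forall>d<d0. coeff p d \<noteq> 0 \<longrightarrow> D (coeff p d) < ereal (a + real d))"
proof -
  define T where "T = {d. coeff p d \<noteq> 0 \<and> D (coeff p d) \<noteq> -\<infinity>}"
  have finT: "finite T"
  proof -
    have "T \<subseteq> {..degree p}" unfolding T_def using le_degree by auto
    thus ?thesis by (rule finite_subset) auto
  qed
  have d1T: "d1 \<in> T" using nz ge unfolding T_def by auto
  define g where "g d = real_of_ereal (D (coeff p d)) - real d" for d
  have Dg: "D (coeff p d) = ereal (g d + real d)" if "d \<in> T" for d
    using that fin[of "coeff p d"] by (cases "D (coeff p d)") (auto simp: T_def g_def)
  define a where "a = Max (g ` T)"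
  have aT: "a \<in> g ` T" unfolding a_def using finT d1T by (intro Max_in) auto
  have ga: "g d \<le> a" if "d \<in> T" for d unfolding a_def using finT that by simp
  have "ereal (real d1) \<le> ereal (g d1 + real d1)" using ge Dg[OF d1T] by simp
  hence "g d1 \<ge> 0" by simp
  hence a0: "a \<ge> 0" using ga[OF d1T] by simp
  define d0 where "d0 = (LEAST d. d \<in> T \<and> g d = a)"
  have ex: "\<exists>d. d \<in> T \<and> g d = a" using aT by auto
  have d0: "d0 \<in> T \<and> g d0 = a" unfolding d0_def by (rule LeastI_ex[OF ex])
  have less: "\<not> (d \<in> T \<and> g d = a)" if "d < d0" for d
    using not_less_Least[of d "\<lambda>d. d \<in> T \<and> g d = a"] that unfolding d0_def by blast
  show ?thesis
  proof (intro exI conjI allI impI)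
    show "a \<ge> 0" by (rule a0)
    show "coeff p d0 \<noteq> 0" using d0 unfolding T_def by simp
    show "D (coeff p d0) = ereal (a + real d0)" using Dg d0 by simp
  next
    fix d assume "coeff p d \<noteq> 0"
    show "D (coeff p d) \<le> ereal (a + real d)"
    proof (cases "d \<in> T")
      case True thus ?thesis using Dg ga by simp
    next
      case False thus ?thesis using \<open>coeff p d \<noteq> 0\<close> unfolding T_def by simp
    qed
  next
    fix d assume "d < d0" "coeff p d \<noteq> 0"
    show "D (coeff p d) < ereal (a + real d)"
    proof (cases "d \<in> T")
      case True
      hence "g d < a" using ga[OF True] less[OF \<open>d < d0\<close>] by linarith
      thus ?thesis using Dg[OF True] by simp
    next
      case False thus ?thesis using \<open>coeff p d \<noteq> 0\<close> unfolding T_def by simp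
    qed
  qed
qed

lemma cl_union_fin:
  assumes "finite F" "\<forall>i\<in>F. cl (C i)" "\<And>A B. cl A \<Longrightarrow> cl B \<Longrightarrow> cl (A \<union> B)" "cl {}"
  shows "cl (\<Union>i\<in>F. C i)"
  using assms(1,2) by (induction F rule: finite_induct) (auto intro: assms(3,4))

lemma irr_finite_union:
  assumes irr: "irreducible_wrt cl Z" and fin: "finite F" and clC: "\<forall>i\<in>F. cl (C i)"
    and cu: "\<And>A B. cl A \<Longrightarrow> cl B \<Longrightarrow> cl (A \<union> B)" and ce: "cl {}"
    and sub: "Z \<subseteq> (\<Union>i\<in>F. C i)"
  shows "\<exists>i\<in>F. Z \<subseteq> C i"
  using fin clC sub
proof (induction F rule: finite_induct)
  case empty thus ?case using irr unfolding irreducible_wrt_def by auto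
next
  case (insert x F)
  have c1: "cl (\<Union>i\<in>F. C i)" using cl_union_fin[OF insert(1), of cl C] insert(4) cu ce by auto
  have "Z \<subseteq> C x \<union> (\<Union>i\<in>F. C i)" using insert(5) by auto
  hence "Z \<subseteq> C x \<or> Z \<subseteq> (\<Union>i\<in>F. C i)" using irr c1 insert(4) unfolding irreducible_wrt_def by auto
  thus ?case using insert by auto
qed

lemma components_eq:
  assumes fin: "finite I" and clZ: "\<forall>i\<in>I. cl (Z i)" and irr: "\<forall>i\<in>I. irreducible_wrt cl (Z i)"
    and inc: "\<forall>i\<in>I. \<forall>j\<in>I. Z i \<subseteq> Z j \<longrightarrow> i = j"
    and cu: "\<And>A B. cl A \<Longrightarrow> cl B \<Longrightarrow> cl (A \<union> B)" and ce: "cl {}"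
    and Y: "Y = (\<Union>i\<in>I. Z i)"
  shows "irreducible_components cl Y = Z ` I"
proof (intro equalityI subsetI)
  fix W assume "W \<in> irreducible_components cl Y"
  hence W: "W \<subseteq> Y" "irreducible_wrt cl W"
    "\<And>Z'. W \<subseteq> Z' \<Longrightarrow> Z' \<subseteq> Y \<Longrightarrow> irreducible_wrt cl Z' \<Longrightarrow> Z' = W"
    unfolding irreducible_components_def by auto
  obtain j where j: "j \<in> I" "W \<subseteq> Z j"
    using irr_finite_union[OF W(2) fin clZ cu ce] W(1) Y by auto
  have "Z j = W" using W(3)[OF j(2)] Y j(1) irr by auto
  thus "W \<in> Z ` I" using j by auto
next
  fix W assume "W \<in> Z ` I"
  then obtain i where i: "i \<in> I" "W = Z i" by auto
  have "Z' = Z i" if h: "Z i \<subseteq> Z'" "Z' \<subseteq> Y" "irreducible_wrt cl Z'" for Z'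
  proof -
    obtain j where j: "j \<in> I" "Z' \<subseteq> Z j"
      using irr_finite_union[OF h(3) fin clZ cu ce] h(2) Y by auto
    have "i = j" using inc i(1) j h(1) by blast
    thus ?thesis using j h(1) by auto
  qed
  thus "W \<in> irreducible_components cl Y"
    unfolding irreducible_components_def using i Y irr by auto
qed




locale dctx =
  fixes emb :: "'k::field \<Rightarrow> 'a::idom" and \<delta> :: "'a \<Rightarrow> ereal"
    and \<delta>s :: "nat \<Rightarrow> 'a \<Rightarrow> ereal" and N :: nat
  assumes kalg: "k_algebra emb" and nonneg: "nonneg_on_nonzero \<delta>"
    and pres: "subdegree_presentation emb \<delta> N \<delta>s" and minp: "minimal_presentation N \<delta>s"
begin

lemma N1: "N \<ge> 1" using pres unfolding subdegree_presentation_def by blast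
lemma dl: "degree_like emb \<delta>" using pres unfolding subdegree_presentation_def by blast
lemma sd: "i < N \<Longrightarrow> semidegree emb (\<delta>s i)" using pres unfolding subdegree_presentation_def by blast
lemma dli: "i < N \<Longrightarrow> degree_like emb (\<delta>s i)" using sd unfolding semidegree_def by blast
lemma maxeq: "f \<noteq> 0 \<Longrightarrow> \<delta> f = Max ((\<lambda>i. \<delta>s i f) ` {..<N})"
  using pres unfolding subdegree_presentation_def by blast
lemma sd_mult: "i < N \<Longrightarrow> f \<noteq> 0 \<Longrightarrow> g \<noteq> 0 \<Longrightarrow> \<delta>s i (f * g) = \<delta>s i f + \<delta>s i g"
  using sd unfolding semidegree_def by blast
lemma le_max: "i < N \<Longrightarrow> f \<noteq> 0 \<Longrightarrow> \<delta>s i f \<le> \<delta> f"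
  using maxeq by simp
lemma max_lt: assumes "f \<noteq> 0" "\<forall>i<N. \<delta>s i f < c" shows "\<delta> f < c"
proof -
  have "(0::nat) \<in> {..<N}" using N1 by simp
  hence ne: "(\<lambda>i. \<delta>s i f) ` {..<N} \<noteq> {}" by blast
  show ?thesis using Max_less_iff[OF _ ne, of c] maxeq[OF assms(1)] assms(2) by auto
qed
lemma max_unique: "i < N \<Longrightarrow> f \<noteq> 0 \<Longrightarrow> (\<forall>j<N. j \<noteq> i \<longrightarrow> \<delta>s j f < \<delta>s i f) \<Longrightarrow> \<delta> f = \<delta>s i f"
  unfolding maxeq by (intro Max_eqI) (auto simp: le_less)
lemma nn: "f \<noteq> 0 \<Longrightarrow> \<delta> f \<ge> 0" using nonneg unfolding nonneg_on_nonzero_def by blast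
lemma one_d: "\<delta> 1 = 0" using dl_one[OF dl kalg] .
lemma one_di: "i < N \<Longrightarrow> \<delta>s i 1 = 0" using dl_one[OF dli kalg] .

lemma nonneg_int: assumes "f \<noteq> 0" obtains d :: nat where "\<delta> f = ereal (real d)"
proof -
  have "\<delta> f \<ge> 0" using nn[OF assms] .
  then obtain m :: int where m: "\<delta> f = ereal (real_of_int m)" using dl_int[OF dl assms] by auto
  hence "m \<ge> 0" using \<open>\<delta> f \<ge> 0\<close> by simp
  hence "\<delta> f = ereal (real (nat m))" using m by simp
  thus ?thesis using that by blast
qed

abbreviation R where "R \<equiv> Rdelta \<delta>"
abbreviation t :: "'a poly" where "t \<equiv> monom 1 1"

lemma fdeg_ex: "\<exists>d. f \<in> Fdeg \<delta> d"
proof (cases "f = 0")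
  case True thus ?thesis by (auto simp: Fdeg_def)
next
  case False
  show ?thesis
  proof (cases "\<delta> f = -\<infinity>")
    case True thus ?thesis by (auto simp: Fdeg_def)
  next
    case nI: False
    then obtain m :: int where m: "\<delta> f = ereal (real_of_int m)" using dl_int[OF dl False] by auto
    have "real_of_int m \<le> real (nat m)" by simp
    hence "f \<in> Fdeg \<delta> (nat m)" using m by (simp add: Fdeg_def)
    thus ?thesis by blast
  qed
qed

lemma fdeg_0: "0 \<in> Fdeg \<delta> d" by (simp add: Fdeg_def)
lemma fdeg_1: "1 \<in> Fdeg \<delta> d" by (simp add: Fdeg_def one_d)

lemma fdeg_mono: "d \<le> e \<Longrightarrow> f \<in> Fdeg \<delta> d \<Longrightarrow> f \<in> Fdeg \<delta> e"
proof -
  assume de: "d \<le> e" and f: "f \<in> Fdeg \<delta> d"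
  have "ereal (real d) \<le> ereal (real e)" using de by simp
  thus ?thesis using f unfolding Fdeg_def by (auto intro: order_trans)
qed

lemma fdeg_add: assumes "f \<in> Fdeg \<delta> d" "g \<in> Fdeg \<delta> d" shows "f + g \<in> Fdeg \<delta> d"
proof (cases "f = 0 \<or> g = 0 \<or> f + g = 0")
  case True thus ?thesis using assms by (auto simp: Fdeg_def)
next
  case False
  hence "\<delta> (f+g) \<le> max (\<delta> f) (\<delta> g)" using dl_add_le[OF dl] by blast
  also have "\<dots> \<le> ereal (real d)" using assms False by (simp add: Fdeg_def)
  finally show ?thesis by (simp add: Fdeg_def)
qed

lemma fdeg_neg: "f \<in> Fdeg \<delta> d \<Longrightarrow> -f \<in> Fdeg \<delta> d"
  using dl_neg[OF dl kalg, of f] unfolding Fdeg_def by (cases "f = 0") auto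

lemma fdeg_sum: "(\<forall>k\<in>K. g k \<in> Fdeg \<delta> d) \<Longrightarrow> sum g K \<in> Fdeg \<delta> d"
proof (induction K rule: infinite_finite_induct)
  case (infinite A) thus ?case by (simp add: fdeg_0)
next
  case empty thus ?case by (simp add: fdeg_0)
next
  case (insert x F) thus ?case using fdeg_add by simp
qed

lemma fdeg_mult: assumes "f \<in> Fdeg \<delta> d" "g \<in> Fdeg \<delta> e" shows "f * g \<in> Fdeg \<delta> (d + e)"
proof (cases "f = 0 \<or> g = 0")
  case True thus ?thesis by (auto simp: Fdeg_def)
next
  case False
  hence "\<delta> (f*g) \<le> \<delta> f + \<delta> g" using dl_mult_le[OF dl] by blast
  also have "\<dots> \<le> ereal (real d + real e)"
    using assms False by (intro ereal_le_add) (auto simp: Fdeg_def)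
  finally show ?thesis by (simp add: Fdeg_def)
qed

lemma R_iff: "p \<in> R \<longleftrightarrow> (\<forall>d. coeff p d \<in> Fdeg \<delta> d)" by (simp add: Rdelta_def)

lemma monom_R: "monom f d \<in> R \<longleftrightarrow> f \<in> Fdeg \<delta> d"
  unfolding R_iff by (auto simp: fdeg_0)

lemma R_0: "0 \<in> R" by (simp add: R_iff fdeg_0)
lemma R_1: "1 \<in> R"
  unfolding R_iff by (auto simp: fdeg_0 fdeg_1 coeff_1)
lemma t_R: "t \<in> R" by (simp add: monom_R fdeg_1)
lemma R_add: "p \<in> R \<Longrightarrow> q \<in> R \<Longrightarrow> p + q \<in> R" by (simp add: R_iff fdeg_add)
lemma R_neg: "p \<in> R \<Longrightarrow> - p \<in> R" by (simp add: R_iff fdeg_neg)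
lemma R_mult: assumes "p \<in> R" "q \<in> R" shows "p * q \<in> R"
  unfolding R_iff
proof
  fix n
  have "coeff p i * coeff q (n - i) \<in> Fdeg \<delta> n" if "i \<in> {..n}" for i
  proof -
    have "coeff p i * coeff q (n - i) \<in> Fdeg \<delta> (i + (n - i))"
      using assms by (intro fdeg_mult) (auto simp: R_iff)
    thus ?thesis using that by simp
  qed
  thus "coeff (p * q) n \<in> Fdeg \<delta> n" unfolding coeff_mult by (intro fdeg_sum) auto
qed

lemma R_coeff: "p \<in> R \<Longrightarrow> coeff p d \<in> Fdeg \<delta> d" by (simp add: R_iff)

lemma monom_1_0: "monom (1::'a) 0 = 1" by (simp add: monom_0 one_pCons)

section \<open>Homogeneous primes\<close>

lemma Proj_facts:
  assumes "P \<in> Proj R"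
  shows "P \<subseteq> R" "0 \<in> P" "\<And>p q. p \<in> P \<Longrightarrow> q \<in> P \<Longrightarrow> p + q \<in> P"
    "\<And>r p. r \<in> R \<Longrightarrow> p \<in> P \<Longrightarrow> r * p \<in> P"
    "\<And>p d. p \<in> P \<Longrightarrow> monom (coeff p d) d \<in> P" "P \<noteq> R"
    "\<And>p q. p \<in> R \<Longrightarrow> q \<in> R \<Longrightarrow> p * q \<in> P \<Longrightarrow> p \<in> P \<or> q \<in> P"
    "\<not> irrelevant R \<subseteq> P"
proof -
  have h: "hom_ideal R P" "P \<noteq> R" "\<forall>p\<in>R. \<forall>q\<in>R. p * q \<in> P \<longrightarrow> p \<in> P \<or> q \<in> P"
    "\<not> irrelevant R \<subseteq> P" using assms by (simp_all add: Proj_def hom_prime_def)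
  have g: "P \<subseteq> R" "0 \<in> P" "\<forall>p\<in>P. \<forall>q\<in>P. p + q \<in> P" "\<forall>r\<in>R. \<forall>p\<in>P. r * p \<in> P"
    "\<forall>p\<in>P. \<forall>d. monom (coeff p d) d \<in> P" using h(1) by (simp_all add: hom_ideal_def)
  show "P \<subseteq> R" "0 \<in> P" by (rule g(1), rule g(2))
  show "\<And>p q. p \<in> P \<Longrightarrow> q \<in> P \<Longrightarrow> p + q \<in> P" using g(3) by blast
  show "\<And>r p. r \<in> R \<Longrightarrow> p \<in> P \<Longrightarrow> r * p \<in> P" using g(4) by blast
  show "\<And>p d. p \<in> P \<Longrightarrow> monom (coeff p d) d \<in> P" using g(5) by blast
  show "P \<noteq> R" by (rule h(2))
  show "\<And>p q. p \<in> R \<Longrightarrow> q \<in> R \<Longrightarrow> p * q \<in> P \<Longrightarrow> p \<in> P \<or> q \<in> P" using h(3) by blast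
  show "\<not> irrelevant R \<subseteq> P" by (rule h(4))
qed

lemma one_notin: assumes "P \<in> Proj R" shows "1 \<notin> P"
proof
  assume "1 \<in> P"
  hence "R \<subseteq> P" using Proj_facts(4)[OF assms] by (metis mult.right_neutral subsetI)
  thus False using Proj_facts(1,6)[OF assms] by blast
qed

lemma P_sum: assumes "P \<in> Proj R" shows "(\<forall>k\<in>K. g k \<in> P) \<Longrightarrow> sum g K \<in> P"
proof (induction K rule: infinite_finite_induct)
  case (infinite A) thus ?case using Proj_facts(2)[OF assms] by simp
next
  case empty thus ?case using Proj_facts(2)[OF assms] by simp
next
  case (insert x F) thus ?case using Proj_facts(3)[OF assms] by simp
qed

lemma P_decomp: assumes "P \<in> Proj R" "\<forall>d. monom (coeff q d) d \<in> P" shows "q \<in> P"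
proof -
  have "(\<Sum>i\<le>degree q. monom (coeff q i) i) \<in> P" using assms by (intro P_sum) auto
  thus ?thesis by (simp add: poly_as_sum_of_monoms)
qed

lemma prime_mult_notin: "P \<in> Proj R \<Longrightarrow> a \<in> R \<Longrightarrow> b \<in> R \<Longrightarrow> a \<notin> P \<Longrightarrow> b \<notin> P \<Longrightarrow> a * b \<notin> P"
  using Proj_facts(7) by blast

lemma monom0_in: "P \<in> Proj R \<Longrightarrow> monom 0 d \<in> P" using Proj_facts(2) by simp

section \<open>The image of Spec\<close>

context
  fixes P assumes P: "P \<in> Proj R" and tP: "t \<notin> P"
begin

lemma shift1: assumes "f \<in> Fdeg \<delta> d" shows "monom f (Suc d) \<in> P \<longleftrightarrow> monom f d \<in> P"
proof -
  have eq: "monom f (Suc d) = t * monom f d" by (simp add: mult_monom)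
  have mR: "monom f d \<in> R" using assms by (simp add: monom_R)
  show ?thesis
  proof
    assume "monom f (Suc d) \<in> P"
    thus "monom f d \<in> P" using Proj_facts(7)[OF P t_R mR] tP eq by auto
  next
    assume "monom f d \<in> P"
    thus "monom f (Suc d) \<in> P" using Proj_facts(4)[OF P t_R] eq by auto
  qed
qed

lemma shift2: assumes "f \<in> Fdeg \<delta> d" shows "monom f (d + k) \<in> P \<longleftrightarrow> monom f d \<in> P"
proof (induction k)
  case 0 thus ?case by simp
next
  case (Suc k)
  have "f \<in> Fdeg \<delta> (d + k)" using fdeg_mono[OF _ assms] by simp
  thus ?case using shift1[of f "d + k"] Suc by simp
qed

lemma shift3: assumes "f \<in> Fdeg \<delta> d" "f \<in> Fdeg \<delta> e" shows "monom f e \<in> P \<longleftrightarrow> monom f d \<in> P"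
proof (cases "d \<le> e")
  case True thus ?thesis using shift2[OF assms(1), of "e - d"] by simp
next
  case False thus ?thesis using shift2[OF assms(2), of "d - e"] by simp
qed

definition pp where "pp = {f. \<exists>d. f \<in> Fdeg \<delta> d \<and> monom f d \<in> P}"

lemma memb: "f \<in> Fdeg \<delta> d \<Longrightarrow> f \<in> pp \<longleftrightarrow> monom f d \<in> P"
  unfolding pp_def using shift3 by blast

lemma pp_prime: "prime_ideal pp"
  unfolding prime_ideal_def
proof (intro conjI ballI allI impI)
  show "0 \<in> pp" using memb[OF fdeg_0[of 0]] monom0_in[OF P] by simp
next
  fix a b assume a: "a \<in> pp" and b: "b \<in> pp"
  obtain da where da: "a \<in> Fdeg \<delta> da" using a unfolding pp_def by blast
  obtain db where db: "b \<in> Fdeg \<delta> db" using b unfolding pp_def by blast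
  define m where "m = max da db"
  have am: "a \<in> Fdeg \<delta> m" "b \<in> Fdeg \<delta> m" using fdeg_mono[OF max.cobounded1 da] fdeg_mono[OF max.cobounded2 db] unfolding m_def by auto
  have "monom a m + monom b m \<in> P" using memb am a b Proj_facts(3)[OF P] by blast
  hence "monom (a + b) m \<in> P" by (simp add: add_monom)
  thus "a + b \<in> pp" using memb fdeg_add[OF am] by blast
next
  fix r a assume a: "a \<in> pp"
  obtain d where d: "a \<in> Fdeg \<delta> d" using a unfolding pp_def by blast
  obtain e where e: "r \<in> Fdeg \<delta> e" using fdeg_ex by blast
  have "monom r e * monom a d \<in> P" using Proj_facts(4)[OF P] e d memb a monom_R by blast
  hence "monom (r * a) (e + d) \<in> P" by (simp add: mult_monom)
  thus "r * a \<in> pp" using memb fdeg_mult[OF e d] by blast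
next
  show "pp \<noteq> UNIV"
  proof
    assume "pp = UNIV"
    hence "monom 1 0 \<in> P" using memb[OF fdeg_1[of 0]] by blast
    thus False using one_notin[OF P] monom_1_0 by simp
  qed
next
  fix a b assume ab: "a * b \<in> pp"
  obtain d where d: "a \<in> Fdeg \<delta> d" using fdeg_ex by blast
  obtain e where e: "b \<in> Fdeg \<delta> e" using fdeg_ex by blast
  have "monom (a * b) (d + e) \<in> P" using memb fdeg_mult[OF d e] ab by blast
  hence "monom a d * monom b e \<in> P" by (simp add: mult_monom)
  hence "monom a d \<in> P \<or> monom b e \<in> P" using Proj_facts(7)[OF P] d e monom_R by blast
  thus "a \<in> pp \<or> b \<in> pp" using memb d e by blast
qed

lemma P_image: "P = spec_to_proj \<delta> pp"
  unfolding spec_to_proj_def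
proof (intro equalityI subsetI)
  fix q assume q: "q \<in> P"
  have qR: "q \<in> R" using Proj_facts(1)[OF P] q by blast
  have "coeff q d \<in> pp" for d
    using memb[OF R_coeff[OF qR]] Proj_facts(5)[OF P q] by blast
  thus "q \<in> {q \<in> R. \<forall>d. coeff q d \<in> pp}" using qR by blast
next
  fix q assume q: "q \<in> {q \<in> R. \<forall>d. coeff q d \<in> pp}"
  hence "\<forall>d. monom (coeff q d) d \<in> P" using memb R_coeff by blast
  thus "q \<in> P" using P_decomp[OF P] by blast
qed

end

lemma X_inf_eq: "X_infinity \<delta> = {P \<in> Proj R. t \<in> P}"
proof (intro equalityI subsetI)
  fix P assume "P \<in> X_infinity \<delta>"
  hence P: "P \<in> Proj R" "P \<notin> spec_to_proj \<delta> ` Spec" unfolding X_infinity_def by auto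
  have "t \<in> P"
  proof (rule ccontr)
    assume "t \<notin> P"
    hence "P = spec_to_proj \<delta> (pp P)" "pp P \<in> Spec"
      using P_image[OF P(1)] pp_prime[OF P(1)] by (auto simp: Spec_def)
    thus False using P(2) by blast
  qed
  thus "P \<in> {P \<in> Proj R. t \<in> P}" using P by blast
next
  fix P assume P: "P \<in> {P \<in> Proj R. t \<in> P}"
  have "P \<notin> spec_to_proj \<delta> ` Spec"
  proof
    assume "P \<in> spec_to_proj \<delta> ` Spec"
    then obtain p where p: "prime_ideal p" "P = spec_to_proj \<delta> p" by (auto simp: Spec_def)
    hence "coeff t 1 \<in> p" using P unfolding spec_to_proj_def by blast
    hence "1 \<in> p" by simp
    hence "\<forall>r. r \<in> p" using p(1) unfolding prime_ideal_def by (metis mult.right_neutral)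
    thus False using p(1) unfolding prime_ideal_def by blast
  qed
  thus "P \<in> X_infinity \<delta>" using P unfolding X_infinity_def by blast
qed

end




context dctx
begin

definition PI where "PI i = {q \<in> R. \<forall>d. small (\<delta>s i) (ereal (real d)) (coeff q d)}"

lemma PI_R: "PI i \<subseteq> R" unfolding PI_def by blast

lemma monom_PI: "i < N \<Longrightarrow> f \<in> Fdeg \<delta> d \<Longrightarrow> small (\<delta>s i) (ereal (real d)) f \<Longrightarrow> monom f d \<in> PI i"
  unfolding PI_def by (auto simp: monom_R small_def)

lemma PI_hom_ideal: assumes i: "i < N" shows "hom_ideal R (PI i)"
  unfolding hom_ideal_def
proof (intro conjI ballI allI)
  show "PI i \<subseteq> R" by (rule PI_R)
  show "0 \<in> PI i" unfolding PI_def by (simp add: R_0 small_def)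
next
  fix p q assume "p \<in> PI i" "q \<in> PI i"
  thus "p + q \<in> PI i" unfolding PI_def using R_add small_add[OF dli[OF i]] by auto
next
  fix p assume "p \<in> PI i"
  thus "- p \<in> PI i" unfolding PI_def using R_neg small_neg[OF dli[OF i] kalg] by auto
next
  fix p d assume p: "p \<in> PI i"
  show "monom (coeff p d) d \<in> PI i"
    using p R_coeff monom_PI[OF i] unfolding PI_def by blast
next
  fix r p assume r: "r \<in> R" and p: "p \<in> PI i"
  have pR: "p \<in> R" using p PI_R by blast
  have "small (\<delta>s i) (ereal (real n)) (coeff (r * p) n)" for n
    unfolding coeff_mult
  proof (intro small_sum[OF dli[OF i]] ballI)
    fix k assume k: "k \<in> {..n}"
    show "small (\<delta>s i) (ereal (real n)) (coeff r k * coeff p (n - k))"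
    proof (cases "coeff r k = 0 \<or> coeff p (n - k) = 0")
      case True thus ?thesis by (auto simp: small_def)
    next
      case False
      have y: "\<delta>s i (coeff p (n - k)) < ereal (real (n - k))"
        using p False unfolding PI_def small_def by blast
      have x: "\<delta>s i (coeff r k) \<le> ereal (real k)"
        using le_max[OF i, of "coeff r k"] R_coeff[OF r, of k] False unfolding Fdeg_def by auto
      have "\<delta>s i (coeff p (n - k)) + \<delta>s i (coeff r k) < ereal (real (n - k) + real k)"
        by (rule ereal_lt_add[OF y x])
      moreover have "real (n - k) + real k = real n" using k by simp
      ultimately show ?thesis using False sd_mult[OF i, of "coeff r k" "coeff p (n - k)"]
        by (simp add: small_def add.commute)
    qed
  qed
  thus "r * p \<in> PI i" unfolding PI_def using R_mult[OF r pR] by blast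
qed

lemma PI_not_small:
  assumes "p \<in> R" "p \<notin> PI i"
  obtains d where "coeff p d \<noteq> 0" "\<delta>s i (coeff p d) \<ge> ereal (real d)"
  using assms unfolding PI_def small_def by (auto simp: not_less)

lemma PI_prime: assumes i: "i < N" and pR: "p \<in> R" and qR: "q \<in> R"
  and p: "p \<notin> PI i" and q: "q \<notin> PI i" shows "p * q \<notin> PI i"
proof -
  let ?D = "\<delta>s i"
  have fin: "\<And>x. x \<noteq> 0 \<Longrightarrow> ?D x \<noteq> \<infinity>" using dl_fin[OF dli[OF i]] .
  obtain d1 where d1: "coeff p d1 \<noteq> 0" "?D (coeff p d1) \<ge> ereal (real d1)"
    using PI_not_small[OF pR p] .
  obtain e1 where e1: "coeff q e1 \<noteq> 0" "?D (coeff q e1) \<ge> ereal (real e1)"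
    using PI_not_small[OF qR q] .
  obtain a d0 where a: "a \<ge> 0" "coeff p d0 \<noteq> 0" "?D (coeff p d0) = ereal (a + real d0)"
    "\<And>d. coeff p d \<noteq> 0 \<Longrightarrow> ?D (coeff p d) \<le> ereal (a + real d)"
    "\<And>d. d < d0 \<Longrightarrow> coeff p d \<noteq> 0 \<Longrightarrow> ?D (coeff p d) < ereal (a + real d)"
    using top_term[where D="\<delta>s i", OF fin d1(1,2)] by blast
  obtain b e0 where b: "b \<ge> 0" "coeff q e0 \<noteq> 0" "?D (coeff q e0) = ereal (b + real e0)"
    "\<And>d. coeff q d \<noteq> 0 \<Longrightarrow> ?D (coeff q d) \<le> ereal (b + real d)"
    "\<And>d. d < e0 \<Longrightarrow> coeff q d \<noteq> 0 \<Longrightarrow> ?D (coeff q d) < ereal (b + real d)"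
    using top_term[where D="\<delta>s i", OF fin e1(1,2)] by blast
  define n where "n = d0 + e0"
  define c where "c = a + b + real n"
  define g where "g k = coeff p k * coeff q (n - k)" for k
  have split: "coeff (p * q) n = g d0 + sum g ({..n} - {d0})"
    unfolding coeff_mult g_def[symmetric] by (rule sum.remove) (auto simp: n_def)
  have main_nz: "g d0 \<noteq> 0" using a(2) b(2) by (simp add: g_def n_def)
  have main: "?D (g d0) = ereal c"
    using sd_mult[OF i a(2) b(2)] a(3) b(3) by (simp add: g_def n_def c_def)
  have rest: "small ?D (ereal c) (sum g ({..n} - {d0}))"
  proof (intro small_sum[OF dli[OF i]] ballI)
    fix k assume k: "k \<in> {..n} - {d0}"
    hence kn: "k \<le> n" "k \<noteq> d0" by auto
    have rn: "real (n - k) + real k = real n" using kn by simp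
    show "small ?D (ereal c) (g k)"
    proof (cases "coeff p k = 0 \<or> coeff q (n - k) = 0")
      case True thus ?thesis by (auto simp: small_def g_def)
    next
      case False
      hence Dg: "?D (g k) = ?D (coeff p k) + ?D (coeff q (n - k))"
        using sd_mult[OF i] by (simp add: g_def)
      show ?thesis
      proof (cases "k < d0")
        case True
        have "?D (coeff p k) + ?D (coeff q (n - k)) < ereal ((a + real k) + (b + real (n - k)))"
          using a(5)[OF True] b(4) False by (intro ereal_lt_add) auto
        thus ?thesis using Dg rn by (simp add: small_def c_def algebra_simps)
      next
        case False2: False
        hence "n - k < e0" using kn unfolding n_def by auto
        hence "?D (coeff q (n - k)) + ?D (coeff p k) < ereal ((b + real (n - k)) + (a + real k))"
          using b(5) a(4) False by (intro ereal_lt_add) auto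
        thus ?thesis using Dg rn by (simp add: small_def c_def algebra_simps)
      qed
    qed
  qed
  have "sum g ({..n} - {d0}) = 0 \<or> ?D (sum g ({..n} - {d0})) < ?D (g d0)"
    using rest main unfolding small_def by simp
  hence st: "coeff (p * q) n \<noteq> 0 \<and> ?D (coeff (p * q) n) = ereal c"
    using dl_add_strict[OF dli[OF i] kalg main_nz] main split by simp
  have "ereal c \<ge> ereal (real n)" using a(1) b(1) by (simp add: c_def)
  hence "\<not> small ?D (ereal (real n)) (coeff (p * q) n)" using st by (simp add: small_def)
  thus ?thesis unfolding PI_def by blast
qed

lemma PI_one: "i < N \<Longrightarrow> 1 \<notin> PI i"
  unfolding PI_def small_def using one_di by auto

lemma t_PI: "i < N \<Longrightarrow> t \<in> PI i"
  by (intro monom_PI) (auto simp: fdeg_1 small_def one_di)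

lemma zero_irr: assumes i: "i < N" and z: "\<forall>f. f \<noteq> 0 \<longrightarrow> \<delta>s i f = 0"
  shows "irrelevant R \<subseteq> PI i"
proof
  fix q assume "q \<in> irrelevant R"
  hence q: "q \<in> R" "coeff q 0 = 0" unfolding irrelevant_def by auto
  have "small (\<delta>s i) (ereal (real d)) (coeff q d)" for d
    using q z by (cases d) (auto simp: small_def)
  thus "q \<in> PI i" using q unfolding PI_def by blast
qed

end




context dctx
begin

lemma int_val: assumes i: "i < N" "x \<noteq> 0" "\<delta>s i x \<noteq> -\<infinity>"
  obtains m :: int where "\<delta>s i x = ereal (real_of_int m)"
  using dl_int[OF dli[OF i(1)] i(2)] i(3) by auto

lemma pow_bound: assumes i: "i < N" and u: "u \<noteq> 0" and ui: "\<delta>s i u = 0"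
  and uj: "\<forall>j<N. j \<noteq> i \<longrightarrow> \<delta>s j u \<le> ereal (-1)"
  shows "\<delta>s i (u ^ n) = 0 \<and> (\<forall>j<N. j \<noteq> i \<longrightarrow> \<delta>s j (u ^ n) \<le> ereal (- real n))"
proof (induction n)
  case 0 thus ?case using one_di i by simp
next
  case (Suc n)
  have nz: "u ^ n \<noteq> 0" using u by simp
  have a: "\<delta>s i (u ^ Suc n) = 0" using sd_mult[OF i u nz] ui Suc by simp
  have "\<delta>s j (u ^ Suc n) \<le> ereal (- real (Suc n))" if "j < N" "j \<noteq> i" for j
  proof -
    have "\<delta>s j (u ^ Suc n) = \<delta>s j u + \<delta>s j (u ^ n)" using sd_mult[OF that(1) u nz] by simp
    also have "\<dots> \<le> ereal (-1 + - real n)" using uj Suc that by (intro ereal_le_add) auto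
    finally show ?thesis by simp
  qed
  thus ?case using a by blast
qed

lemma nonzero_witness: assumes i: "i < N" and nz: "\<not> (\<forall>f. f \<noteq> 0 \<longrightarrow> \<delta>s i f = 0)"
  shows "\<exists>f d. f \<noteq> 0 \<and> d \<ge> 1 \<and> \<delta> f = ereal (real d) \<and> \<delta>s i f = ereal (real d)"
proof -
  obtain u where u: "u \<noteq> 0" "\<forall>j<N. j \<noteq> i \<longrightarrow> \<delta>s j u < \<delta>s i u"
    using minp i unfolding minimal_presentation_def by blast
  have du: "\<delta> u = \<delta>s i u" using max_unique[OF i u(1)] u(2) by blast
  have ge0: "\<delta>s i u \<ge> 0" using nn[OF u(1)] du by simp
  obtain m :: int where m: "\<delta>s i u = ereal (real_of_int m)"
    using int_val[OF i u(1)] ge0 by auto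
  have m0: "m \<ge> 0" using ge0 m by simp
  show ?thesis
  proof (cases "m \<ge> 1")
    case True
    hence "real (nat m) = real_of_int m" by simp
    thus ?thesis using True u(1) du m by (intro exI[of _ u] exI[of _ "nat m"]) auto
  next
    case False
    hence m00: "m = 0" using m0 by simp
    hence ui: "\<delta>s i u = 0" using m by simp
    have uj: "\<forall>j<N. j \<noteq> i \<longrightarrow> \<delta>s j u \<le> ereal (-1)"
    proof (intro allI impI)
      fix j assume j: "j < N" "j \<noteq> i"
      hence lt: "\<delta>s j u < 0" using u(2) ui by auto
      show "\<delta>s j u \<le> ereal (-1)"
      proof (cases "\<delta>s j u = -\<infinity>")
        case True thus ?thesis by simp
      next
        case False
        then obtain k :: int where k: "\<delta>s j u = ereal (real_of_int k)" using int_val[OF j(1) u(1)] by auto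
        hence "k < 0" using lt by simp
        hence "k \<le> -1" by simp
        thus ?thesis using k by simp
      qed
    qed
    obtain h where h: "h \<noteq> 0" "\<delta>s i h \<noteq> 0" using nz by blast
    define c where "c = (if \<delta>s i h > 0 then real_of_ereal (\<delta>s i h) else 0)"
    define J where "J = {j. j < N \<and> j \<noteq> i}"
    have "\<forall>j\<in>J. eventually (\<lambda>n. \<delta>s j h + ereal (- real n) < ereal c) sequentially"
    proof
      fix j assume "j \<in> J"
      hence "\<delta>s j h \<noteq> \<infinity>" using dl_fin[OF dli h(1)] unfolding J_def by auto
      then obtain n0 where "\<forall>n\<ge>n0. \<delta>s j h + ereal (- real n) < ereal c"
        using ereal_eventually by blast
      thus "eventually (\<lambda>n. \<delta>s j h + ereal (- real n) < ereal c) sequentially"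
        unfolding eventually_sequentially by blast
    qed
    hence "eventually (\<lambda>n. \<forall>j\<in>J. \<delta>s j h + ereal (- real n) < ereal c) sequentially"
      by (intro eventually_ball_finite) (auto simp: J_def)
    then obtain n where n: "\<forall>j\<in>J. \<delta>s j h + ereal (- real n) < ereal c"
      unfolding eventually_sequentially by blast
    define f where "f = h * u ^ n"
    have unz: "u ^ n \<noteq> 0" using u(1) by simp
    have fnz: "f \<noteq> 0" using h(1) unz by (simp add: f_def)
    have pb: "\<delta>s i (u ^ n) = 0" "\<forall>j<N. j \<noteq> i \<longrightarrow> \<delta>s j (u ^ n) \<le> ereal (- real n)"
      using pow_bound[OF i u(1) ui uj] by auto
    have fi: "\<delta>s i f = \<delta>s i h" using sd_mult[OF i h(1) unz] pb(1) by (simp add: f_def)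
    have fj: "\<delta>s j f < ereal c" if "j < N" "j \<noteq> i" for j
    proof -
      have "\<delta>s j f = \<delta>s j h + \<delta>s j (u ^ n)" using sd_mult[OF that(1) h(1) unz] by (simp add: f_def)
      also have "\<dots> \<le> \<delta>s j h + ereal (- real n)" using pb(2) that by (intro add_left_mono) auto
      also have "\<dots> < ereal c" using n that unfolding J_def by auto
      finally show ?thesis .
    qed
    show ?thesis
    proof (cases "\<delta>s i h > 0")
      case True
      have "\<delta>s i h \<noteq> -\<infinity>" using True by auto
      then obtain k :: int where k: "\<delta>s i h = ereal (real_of_int k)" using int_val[OF i h(1)] by auto
      have k1: "k \<ge> 1" using True k by simp
      have ck: "c = real_of_int k" using True k by (simp add: c_def)
      have "\<delta> f = \<delta>s i f" using max_unique[OF i fnz] fj fi k ck by simp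
      moreover have "real (nat k) = real_of_int k" using k1 by simp
      ultimately show ?thesis using fnz fi k k1
        by (intro exI[of _ f] exI[of _ "nat k"]) auto
    next
      case False
      hence neg: "\<delta>s i h < 0" using h(2) by (simp add: not_less le_less)
      have c0: "c = 0" using False by (simp add: c_def)
      have "\<delta> f < 0"
        using max_lt[OF fnz, of 0] fj c0 fi neg by (metis zero_ereal_def)
      thus ?thesis using nn[OF fnz] by simp
    qed
  qed
qed

lemma PI_Proj: assumes i: "i < N" and nz: "\<not> (\<forall>f. f \<noteq> 0 \<longrightarrow> \<delta>s i f = 0)"
  shows "PI i \<in> Proj R"
proof -
  obtain f d where fd: "f \<noteq> 0" "d \<ge> 1" "\<delta> f = ereal (real d)" "\<delta>s i f = ereal (real d)"
    using nonzero_witness[OF i nz] by blast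
  have fF: "f \<in> Fdeg \<delta> d" using fd by (simp add: Fdeg_def)
  have "monom f d \<in> irrelevant R" using fF fd(2) by (simp add: irrelevant_def monom_R)
  moreover have "monom f d \<notin> PI i" using fd unfolding PI_def small_def by auto
  ultimately have rel: "\<not> irrelevant R \<subseteq> PI i" by blast
  have "PI i \<noteq> R" using PI_one[OF i] R_1 by blast
  moreover have "\<forall>p\<in>R. \<forall>q\<in>R. p * q \<in> PI i \<longrightarrow> p \<in> PI i \<or> q \<in> PI i"
    using PI_prime[OF i] by blast
  ultimately have "hom_prime R (PI i)" using PI_hom_ideal[OF i] unfolding hom_prime_def by blast
  thus ?thesis using rel unfolding Proj_def by blast
qed

lemma t_in_P: assumes P: "P \<in> Proj R" and tP: "t \<in> P" shows "\<exists>i<N. PI i \<subseteq> P"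
proof (rule ccontr)
  assume nt: "\<not> ?thesis"
  hence H: "\<exists>f d. f \<in> Fdeg \<delta> d \<and> f \<noteq> 0 \<and> monom f d \<notin> P \<and> \<delta>s i f < ereal (real d)" if i: "i < N" for i
  proof -
    obtain q where q: "q \<in> PI i" "q \<notin> P" using nt i by blast
    have qR: "q \<in> R" using q PI_R by blast
    obtain d where d: "monom (coeff q d) d \<notin> P" using P_decomp[OF P, of q] q(2) by blast
    have "coeff q d \<noteq> 0" using d monom0_in[OF P] by auto
    moreover have "small (\<delta>s i) (ereal (real d)) (coeff q d)" using q(1) unfolding PI_def by blast
    ultimately show ?thesis using R_coeff[OF qR] d unfolding small_def by blast
  qed
  have I: "k \<le> N \<Longrightarrow> \<exists>F D. F \<in> Fdeg \<delta> D \<and> F \<noteq> 0 \<and> monom F D \<notin> P \<and> (\<forall>j<k. \<delta>s j F < ereal (real D))" for k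
  proof (induction k)
    case 0 thus ?case using fdeg_1 one_notin[OF P] monom_1_0 by (intro exI[of _ 1] exI[of _ 0]) auto
  next
    case (Suc k)
    then obtain F D where FD: "F \<in> Fdeg \<delta> D" "F \<noteq> 0" "monom F D \<notin> P" "\<forall>j<k. \<delta>s j F < ereal (real D)"
      by auto
    have kN: "k < N" using Suc by simp
    obtain f d where fd: "f \<in> Fdeg \<delta> d" "f \<noteq> 0" "monom f d \<notin> P" "\<delta>s k f < ereal (real d)"
      using H[OF kN] by blast
    have Fle: "\<delta> F \<le> ereal (real D)" using FD(1,2) by (simp add: Fdeg_def)
    have fle: "\<delta> f \<le> ereal (real d)" using fd(1,2) by (simp add: Fdeg_def)
    have mem: "F * f \<in> Fdeg \<delta> (D + d)" by (rule fdeg_mult[OF FD(1) fd(1)])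
    have nzp: "F * f \<noteq> 0" using FD(2) fd(2) by simp
    have "monom F D * monom f d \<notin> P"
      using prime_mult_notin[OF P _ _ FD(3) fd(3)] FD(1) fd(1) by (simp add: monom_R)
    hence notin: "monom (F * f) (D + d) \<notin> P" by (simp add: mult_monom)
    have "\<delta>s j (F * f) < ereal (real (D + d))" if j: "j < Suc k" for j
    proof -
      have jN: "j < N" using j kN by simp
      have e: "\<delta>s j (F * f) = \<delta>s j F + \<delta>s j f" using sd_mult[OF jN FD(2) fd(2)] .
      show ?thesis
      proof (cases "j < k")
        case True
        have "\<delta>s j F + \<delta>s j f < ereal (real D + real d)"
          using FD(4) True le_max[OF jN fd(2)] fle by (intro ereal_lt_add) (auto intro: order_trans)
        thus ?thesis using e by simp
      next
        case False
        hence jk: "j = k" using j by simp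
        have "\<delta>s j f + \<delta>s j F < ereal (real d + real D)"
          using fd(4) jk le_max[OF jN FD(2)] Fle by (intro ereal_lt_add) (auto intro: order_trans)
        thus ?thesis using e by (simp add: add.commute)
      qed
    qed
    thus ?case using mem nzp notin by blast
  qed
  obtain F D where FD: "F \<in> Fdeg \<delta> D" "F \<noteq> 0" "monom F D \<notin> P" "\<forall>j<N. \<delta>s j F < ereal (real D)"
    using I[of N] by auto
  have lt: "\<delta> F < ereal (real D)" using max_lt[OF FD(2)] FD(4) by blast
  obtain e :: nat where e: "\<delta> F = ereal (real e)" using nonneg_int[OF FD(2)] by blast
  have eD: "e < D" using lt e by simp
  hence FF: "F \<in> Fdeg \<delta> (D - 1)" using e by (simp add: Fdeg_def)
  have "monom F (D - 1) * t \<in> P" using Proj_facts(4)[OF P _ tP] FF by (simp add: monom_R)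
  moreover have "monom F (D - 1) * t = monom F D" using eD by (simp add: mult_monom)
  ultimately show False using FD(3) by simp
qed

lemma cl_empty: "proj_closed R {}"
  unfolding proj_closed_def
proof (intro exI conjI)
  show "R \<subseteq> R" by simp
  show "{} = {P \<in> Proj R. R \<subseteq> P}" using Proj_facts(1,6) by blast
qed

lemma cl_union: assumes A: "proj_closed R A" and B: "proj_closed R B" shows "proj_closed R (A \<union> B)"
proof -
  obtain S1 where S1: "S1 \<subseteq> R" "A = {P \<in> Proj R. S1 \<subseteq> P}" using A unfolding proj_closed_def by blast
  obtain S2 where S2: "S2 \<subseteq> R" "B = {P \<in> Proj R. S2 \<subseteq> P}" using B unfolding proj_closed_def by blast
  define S where "S = {a * b | a b. a \<in> S1 \<and> b \<in> S2}"
  have SR: "S \<subseteq> R" using S1(1) S2(1) R_mult unfolding S_def by blast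
  have "A \<union> B = {P \<in> Proj R. S \<subseteq> P}"
  proof (intro equalityI subsetI)
    fix P assume "P \<in> A \<union> B"
    hence P: "P \<in> Proj R" "S1 \<subseteq> P \<or> S2 \<subseteq> P" using S1 S2 by auto
    have "S \<subseteq> P"
    proof
      fix x assume "x \<in> S"
      then obtain a b where ab: "x = a * b" "a \<in> S1" "b \<in> S2" unfolding S_def by blast
      show "x \<in> P"
      proof (cases "S1 \<subseteq> P")
        case True
        hence "b * a \<in> P" using Proj_facts(4)[OF P(1)] ab S2(1) by blast
        thus ?thesis using ab by (simp add: mult.commute)
      next
        case False
        hence "a * b \<in> P" using P(2) Proj_facts(4)[OF P(1)] ab S1(1) by blast
        thus ?thesis using ab by simp
      qed
    qed
    thus "P \<in> {P \<in> Proj R. S \<subseteq> P}" using P by blast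
  next
    fix P assume P: "P \<in> {P \<in> Proj R. S \<subseteq> P}"
    show "P \<in> A \<union> B"
    proof (rule ccontr)
      assume "P \<notin> A \<union> B"
      then obtain a b where ab: "a \<in> S1" "a \<notin> P" "b \<in> S2" "b \<notin> P" using P S1 S2 by blast
      have "a * b \<in> P" using P ab unfolding S_def by blast
      thus False using prime_mult_notin[of P a b] P ab S1(1) S2(1) by blast
    qed
  qed
  thus ?thesis using SR unfolding proj_closed_def by blast
qed

lemma PI_incomp: assumes i: "i < N" and j: "j < N" and ij: "i \<noteq> j"
  shows "\<not> PI j \<subseteq> PI i"
proof -
  obtain f where f: "f \<noteq> 0" "\<forall>k<N. k \<noteq> i \<longrightarrow> \<delta>s k f < \<delta>s i f"
    using minp i unfolding minimal_presentation_def by blast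
  have df: "\<delta> f = \<delta>s i f" using max_unique[OF i f(1)] f(2) by blast
  obtain d :: nat where d: "\<delta> f = ereal (real d)" using nonneg_int[OF f(1)] by blast
  have fF: "f \<in> Fdeg \<delta> d" using d by (simp add: Fdeg_def)
  have "monom f d \<in> PI j"
    using monom_PI[OF j fF] f(2) j ij df d unfolding small_def by auto
  moreover have "monom f d \<notin> PI i" using df d f(1) unfolding PI_def small_def by auto
  ultimately show ?thesis by blast
qed

lemma main:
  "finite (irreducible_components (proj_closed R) (X_infinity \<delta>))
    \<and> card (irreducible_components (proj_closed R) (X_infinity \<delta>)) =
        (if (\<exists>i<N. \<forall>f. f \<noteq> 0 \<longrightarrow> \<delta>s i f = 0) then N - 1 else N)"
proof -
  define I where "I = {i. i < N \<and> \<not> (\<forall>f. f \<noteq> 0 \<longrightarrow> \<delta>s i f = 0)}"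
  define Z where "Z i = {P \<in> Proj R. PI i \<subseteq> P}" for i
  have finI: "finite I" unfolding I_def by simp
  have PIP: "PI i \<in> Proj R" if "i \<in> I" for i using PI_Proj that unfolding I_def by blast
  have clZ: "\<forall>i\<in>I. proj_closed R (Z i)" unfolding Z_def proj_closed_def using PI_R by blast
  have irr: "\<forall>i\<in>I. irreducible_wrt (proj_closed R) (Z i)"
  proof
    fix i assume i: "i \<in> I"
    have PZ: "PI i \<in> Z i" using PIP[OF i] unfolding Z_def by blast
    show "irreducible_wrt (proj_closed R) (Z i)"
      unfolding irreducible_wrt_def
    proof (intro conjI allI impI)
      show "Z i \<noteq> {}" using PZ by blast
    next
      fix C1 C2 assume C: "proj_closed R C1 \<and> proj_closed R C2 \<and> Z i \<subseteq> C1 \<union> C2"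
      obtain S1 where S1: "C1 = {P \<in> Proj R. S1 \<subseteq> P}" using C unfolding proj_closed_def by blast
      obtain S2 where S2: "C2 = {P \<in> Proj R. S2 \<subseteq> P}" using C unfolding proj_closed_def by blast
      have "PI i \<in> C1 \<or> PI i \<in> C2" using PZ C by blast
      hence "S1 \<subseteq> PI i \<or> S2 \<subseteq> PI i" using S1 S2 by blast
      thus "Z i \<subseteq> C1 \<or> Z i \<subseteq> C2" using S1 S2 unfolding Z_def by blast
    qed
  qed
  have inc: "\<forall>i\<in>I. \<forall>j\<in>I. Z i \<subseteq> Z j \<longrightarrow> i = j"
  proof (intro ballI impI)
    fix i j assume ij: "i \<in> I" "j \<in> I" "Z i \<subseteq> Z j"
    show "i = j"
    proof (rule ccontr)
      assume ne: "i \<noteq> j"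
      have "PI i \<in> Z j" using ij PIP[OF ij(1)] unfolding Z_def by blast
      hence "PI j \<subseteq> PI i" unfolding Z_def by blast
      thus False using PI_incomp[of i j] ij ne unfolding I_def by blast
    qed
  qed
  have Y: "X_infinity \<delta> = (\<Union>i\<in>I. Z i)"
  proof (intro equalityI subsetI)
    fix P assume "P \<in> X_infinity \<delta>"
    hence P: "P \<in> Proj R" "t \<in> P" using X_inf_eq by auto
    obtain i where i: "i < N" "PI i \<subseteq> P" using t_in_P[OF P] by blast
    have "i \<in> I"
    proof (rule ccontr)
      assume "i \<notin> I"
      hence "irrelevant R \<subseteq> PI i" using zero_irr i unfolding I_def by blast
      thus False using Proj_facts(8)[OF P(1)] i(2) by blast
    qed
    thus "P \<in> (\<Union>i\<in>I. Z i)" using P i unfolding Z_def by blast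
  next
    fix P assume "P \<in> (\<Union>i\<in>I. Z i)"
    then obtain i where i: "i \<in> I" "P \<in> Proj R" "PI i \<subseteq> P" unfolding Z_def by blast
    have "t \<in> P" using t_PI[of i] i unfolding I_def by blast
    thus "P \<in> X_infinity \<delta>" using X_inf_eq i by blast
  qed
  have comp: "irreducible_components (proj_closed R) (X_infinity \<delta>) = Z ` I"
    by (rule components_eq[OF finI clZ irr inc cl_union cl_empty Y])
  have injZ: "inj_on Z I" using inc unfolding inj_on_def by blast
  have cardI: "card I = (if (\<exists>i<N. \<forall>f. f \<noteq> 0 \<longrightarrow> \<delta>s i f = 0) then N - 1 else N)"
  proof (cases "\<exists>i<N. \<forall>f. f \<noteq> 0 \<longrightarrow> \<delta>s i f = 0")
    case True
    then obtain i0 where i0: "i0 < N" "\<forall>f. f \<noteq> 0 \<longrightarrow> \<delta>s i0 f = 0" by blast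
    have uniq: "i = i0" if "i < N" "\<forall>f. f \<noteq> 0 \<longrightarrow> \<delta>s i f = 0" for i
    proof (rule ccontr)
      assume ne: "i \<noteq> i0"
      obtain f where f: "f \<noteq> 0" "\<forall>k<N. k \<noteq> i0 \<longrightarrow> \<delta>s k f < \<delta>s i0 f"
        using minp i0(1) unfolding minimal_presentation_def by blast
      thus False using that ne i0(2) by auto
    qed
    have "I = {..<N} - {i0}"
    proof (intro equalityI subsetI)
      fix i assume "i \<in> I" thus "i \<in> {..<N} - {i0}" using i0 unfolding I_def by auto
    next
      fix i assume "i \<in> {..<N} - {i0}"
      hence i: "i < N" "i \<noteq> i0" by auto
      hence "\<not> (\<forall>f. f \<noteq> 0 \<longrightarrow> \<delta>s i f = 0)" using uniq by blast
      thus "i \<in> I" using i unfolding I_def by blast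
    qed
    thus ?thesis using True i0(1) by simp
  next
    case False
    hence "I = {..<N}" unfolding I_def by auto
    thus ?thesis using False by (simp only: if_False card_lessThan)
  qed
  show ?thesis using comp finI card_image[OF injZ] cardI by simp
qed

end



theorem corollary4p4:
  fixes emb :: "'k::field \<Rightarrow> 'a::idom"
    and \<delta> :: "'a \<Rightarrow> ereal" and \<delta>s :: "nat \<Rightarrow> 'a \<Rightarrow> ereal" and N :: nat
  assumes "alg_closed TYPE('k)"
    and "k_algebra emb"
    and "nonneg_on_nonzero \<delta>"
    and "subdegree_presentation emb \<delta> N \<delta>s"
    and "minimal_presentation N \<delta>s"
  shows "finite (irreducible_components (proj_closed (Rdelta \<delta>)) (X_infinity \<delta>))
    \<and> card (irreducible_components (proj_closed (Rdelta \<delta>)) (X_infinity \<delta>)) =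
        (if (\<exists>i<N. \<forall>f. f \<noteq> 0 \<longrightarrow> \<delta>s i f = 0) then N - 1 else N)"
proof -
  interpret dctx emb \<delta> \<delta>s N using assms(2-5) by (rule dctx.intro)
  show ?thesis by (rule main)
qed

end
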